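(* Let $V$ be a finite-dimensional complex vector space and $R(z)\in\mathrm{End}(V\otimes V)$, $z\in\mathbb{C}$, a family of operators satisfying $R(u)_{12}R(u+v)_{23}R(v)_{12}=R(v)_{23}R(u+v)_{12}R(u)_{23}$ on $V^{\otimes3}$ for all $u,v\in\mathbb{C}$. If $R(0)=I\otimes I$, then for each $z\in\mathbb{C}$ there is a scalar $c(z)\in\mathbb{C}$ with $R(z)R(-z)=R(-z)R(z)=c(z)\,I\otimes I$. In particular, if $R(z)$ is not an isomorphism, then $R(z)R(-z)=0=R(-z)R(z)$.
   Context: $I$ denotes the identity on $V$; for $A\in\mathrm{End}(V\otimes V)$, $A_{12}=A\otimes I$ and $A_{23}=I\otimes A$ as operators on $V^{\otimes3}$. *)

theory Defs
  imports "HOL-Analysis.Analysis"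
begin

text \<open>V is modelled as complex^'n (a basis is fixed, 'n finite index type);
  V \<otimes> V has basis indexed by 'n \<times> 'n, V^{\<otimes>3} by 'n \<times> 'n \<times> 'n.
  Operators are matrices: (M $ row $ col), composition is matrix product (**).\<close>

type_synonym 'n op2 = "complex ^ ('n \<times> 'n) ^ ('n \<times> 'n)"
type_synonym 'n op3 = "complex ^ ('n \<times> 'n \<times> 'n) ^ ('n \<times> 'n \<times> 'n)"

text \<open>A_12 = A \<otimes> I on V \<otimes> V \<otimes> V.\<close>
definition op12 :: "'n::finite op2 \<Rightarrow> 'n op3" where
  "op12 A = (\<chi> p q. if snd (snd p) = snd (snd q)
                      then A $ (fst p, fst (snd p)) $ (fst q, fst (snd q)) else 0)"

text \<open>A_23 = I \<otimes> A on V \<otimes> V \<otimes> V.\<close>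
definition op23 :: "'n::finite op2 \<Rightarrow> 'n op3" where
  "op23 A = (\<chi> p q. if fst p = fst q then A $ snd p $ snd q else 0)"

end

theory Submission
  imports Defs
begin

lemma sum3: "(\<Sum>r\<in>(UNIV::('n::finite\<times>'n\<times>'n) set). f r) = (\<Sum>x\<in>UNIV. \<Sum>y\<in>UNIV. \<Sum>z\<in>UNIV. f (x,y,z))"
  by (simp add: UNIV_Times_UNIV[symmetric] sum.cartesian_product del: UNIV_Times_UNIV)
lemma sum2: "(\<Sum>r\<in>(UNIV::('n::finite\<times>'n) set). f r) = (\<Sum>x\<in>UNIV. \<Sum>y\<in>UNIV. f (x,y))"
  by (simp add: UNIV_Times_UNIV[symmetric] sum.cartesian_product del: UNIV_Times_UNIV)
lemma op12_mult: "op12 (A::'n::finite op2) ** op12 B = op12 (A ** B)"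
  unfolding op12_def matrix_matrix_mult_def
  apply (simp add: vec_eq_iff sum3 sum2)
  apply (auto simp: if_distrib if_distribR sum.If_cases cong: if_cong)
  done
lemma op23_mult: "op23 (A::'n::finite op2) ** op23 B = op23 (A ** B)"
  unfolding op23_def matrix_matrix_mult_def
  apply (simp add: vec_eq_iff sum3 sum2)
  apply (auto simp: if_distrib if_distribR sum.If_cases cong: if_cong)
  done
lemma op12_1: "op12 (mat 1 :: 'n::finite op2) = mat 1"
  unfolding op12_def mat_def by (auto simp: vec_eq_iff prod_eq_iff)
lemma op23_1: "op23 (mat 1 :: 'n::finite op2) = mat 1"
  unfolding op23_def mat_def by (auto simp: vec_eq_iff prod_eq_iff)
lemma entry: assumes "op12 (X::'n::finite op2) = op23 Y"
  shows "(if c=c' then X$(a,b)$(a',b') else 0) = (if a=a' then Y$(b,c)$(b',c') else 0)"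
proof -
  have "op12 X $ (a,b,c) $ (a',b',c') = op23 Y $ (a,b,c) $ (a',b',c')" using assms by simp
  then show ?thesis unfolding op12_def op23_def by (cases "c=c'"; cases "a=a'"; simp)
qed

lemma scalar: assumes h1: "op12 (X::'n::finite op2) = op23 Y" and h2: "op12 Y = op23 X"
  shows "X = mat (X$(k,k)$(k,k)) \<and> Y = mat (X$(k,k)$(k,k))"
proof -
  note e1 = entry[OF h1] and e2 = entry[OF h2]
  have Xd: "X$(a,b)$(a',b') = (if a = a' then Y$(b,c)$(b',c) else 0)" for a b a' b' c
    using e1[of c c a b a' b'] by simp
  have Yd: "Y$(a,b)$(a',b') = (if a = a' then X$(b,c)$(b',c) else 0)" for a b a' b' c
    using e2[of c c a b a' b'] by simp
  have X: "X$(a,b)$(a',b') = (if a = a' \<and> b = b' then X$(k,k)$(k,k) else 0)" for a b a' b'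
    using Xd[of a b a' b' k] Yd[of b k b' k k] by auto
  have Y: "Y$(a,b)$(a',b') = (if a = a' \<and> b = b' then X$(k,k)$(k,k) else 0)" for a b a' b'
    using Yd[of a b a' b' k] X[of b k b' k] by auto
  define c where "c = X$(k,k)$(k,k)"
  have X': "X$i$j = (if i = j then c else 0)" for i j
    using X[of "fst i" "snd i" "fst j" "snd j"] unfolding c_def by (simp add: prod_eq_iff)
  have Y': "Y$i$j = (if i = j then c else 0)" for i j
    using Y[of "fst i" "snd i" "fst j" "snd j"] unfolding c_def by (simp add: prod_eq_iff)
  have "X = mat c" "Y = mat c" unfolding mat_def vec_eq_iff using X' Y' by simp_all
  then show ?thesis unfolding c_def by simp
qed

theorem lemma2p3:
  fixes R :: "complex \<Rightarrow> 'n::finite op2"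
  assumes YB: "\<And>u v. op12 (R u) ** op23 (R (u + v)) ** op12 (R v)
                    = op23 (R v) ** op12 (R (u + v)) ** op23 (R u)"
    and R0: "R 0 = mat 1"
  shows "(\<forall>z. \<exists>c::complex. R z ** R (- z) = mat c \<and> R (- z) ** R z = mat c)
       \<and> (\<forall>z. \<not> invertible (R z) \<longrightarrow> R z ** R (- z) = 0 \<and> R (- z) ** R z = 0)"
proof -
  have key: "op12 (R u ** R (-u)) = op23 (R (-u) ** R u)" for u
    using YB[of u "-u"] by (simp add: R0 op12_1 op23_1 matrix_mul_rid op12_mult op23_mult)
  have A: "\<exists>c::complex. R z ** R (- z) = mat c \<and> R (- z) ** R z = mat c" for z
  proof -
    have k2: "op12 (R (- z) ** R z) = op23 (R z ** R (- z))" using key[of "-z"] by simp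
    show ?thesis using scalar[OF key[of z] k2] by blast
  qed
  have B: "R z ** R (- z) = 0 \<and> R (- z) ** R z = 0" if ni: "\<not> invertible (R z)" for z
  proof -
    obtain c where c: "R z ** R (- z) = mat c" "R (- z) ** R z = mat c" using A by blast
    have "c = 0"
    proof (rule ccontr)
      assume "c \<noteq> 0"
      define M where "M = (\<chi> i j. R (- z) $ i $ j / c)"
      have m1: "R z ** M = mat 1"
      proof -
        have "(R z ** M) $ i $ j = (R z ** R (- z)) $ i $ j / c" for i j
          unfolding M_def matrix_matrix_mult_def by (simp add: sum_divide_distrib)
        then show ?thesis using c(1) \<open>c \<noteq> 0\<close> by (simp add: vec_eq_iff mat_def)
      qed
      have m2: "M ** R z = mat 1"
      proof -
        have "(M ** R z) $ i $ j = (R (- z) ** R z) $ i $ j / c" for i j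
          unfolding M_def matrix_matrix_mult_def by (simp add: sum_divide_distrib)
        then show ?thesis using c(2) \<open>c \<noteq> 0\<close> by (simp add: vec_eq_iff mat_def)
      qed
      show False using ni m1 m2 unfolding invertible_def by blast
    qed
    then show ?thesis using c by (simp add: mat_0)
  qed
  show ?thesis using A B by blast
qed

end
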